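(* Let $\alpha\in[0,2)$ and $m\in\mathbb{N}$, and let $h_{2m+\alpha}(t)=|t|^{2m+\alpha}$ on $[-1,1]$ (with $|t|^0=1$). Then \[ P_{\mathcal{A}_+}(h_{2m+\alpha})=a_mt^{2m}+b_mt^{2m+2}, \] where \[ a_m=\frac{(4m+1)(4m+3)}{(4m+1+\alpha)(4m+3+\alpha)}\cdot\frac{2-\alpha}{2},\qquad b_m=\frac{(4m+3)(4m+5)}{(4m+1+\alpha)(4m+3+\alpha)}\cdot\frac{\alpha}{2}. \] Moreover, \[ d(h_{2m+\alpha},\mathcal{A}_+)=\frac{\sqrt2\,\alpha(2-\alpha)}{(4m+\alpha+1)(4m+\alpha+3)\sqrt{4m+2\alpha+1}}, \qquad \lambda(h_{2m+\alpha},\mathcal{A}_+)=\frac{\alpha(2-\alpha)}{(4m+\alpha+1)(4m+\alpha+3)}. \]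
   Context: $\mathbb{N}=\{0,1,2,\dots\}$. $L^2([-1,1])$ is the real $L^2$ space for Lebesgue measure. $\mathcal{A}_+=\{\sum_{n=0}^\infty a_nt^n : a_n\ge0,\ \text{the series converges in }L^2([-1,1])\}$ (convergence of partial sums); it is a closed convex cone, and $P_{\mathcal{A}_+}$ denotes the metric projection onto it (the unique nearest point in $\mathcal{A}_+$). $d(w,\mathcal{A}_+)=\inf\{\|w-u\|:u\in\mathcal{A}_+\}$ and, for $w\neq0$, $\lambda(w,\mathcal{A}_+)=d(w,\mathcal{A}_+)/\|w\|$, norms in $L^2([-1,1])$. *)

theory Defs
  imports "HOL-Analysis.Analysis"
begin

text \<open>Real L2([-1,1]) for Lebesgue measure, represented by functions real => real
  (elements are determined up to a.e. equality on [-1,1]).\<close>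

definition L2 :: "(real \<Rightarrow> real) \<Rightarrow> bool" where
  "L2 f \<longleftrightarrow> (\<lambda>t. indicator {-1..1} t * f t) \<in> borel_measurable lborel
      \<and> set_integrable lborel {-1..1::real} (\<lambda>t. (f t)^2)"

definition l2norm :: "(real \<Rightarrow> real) \<Rightarrow> real" where
  "l2norm f = sqrt (LINT t:{-1..1::real}|lborel. (f t)^2)"

definition A_plus :: "(real \<Rightarrow> real) set" where
  "A_plus = {u. L2 u \<and> (\<exists>a::nat \<Rightarrow> real. (\<forall>n. a n \<ge> 0) \<and>
      (\<lambda>N. l2norm (\<lambda>t. u t - (\<Sum>n<N. a n * t ^ n))) \<longlonglongrightarrow> 0)}"

definition is_proj_A_plus :: "(real \<Rightarrow> real) \<Rightarrow> (real \<Rightarrow> real) \<Rightarrow> bool" where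
  "is_proj_A_plus w u \<longleftrightarrow> u \<in> A_plus \<and>
      (\<forall>v\<in>A_plus. l2norm (\<lambda>t. w t - u t) \<le> l2norm (\<lambda>t. w t - v t))"

definition dist_A_plus :: "(real \<Rightarrow> real) \<Rightarrow> real" where
  "dist_A_plus w = (INF u\<in>A_plus. l2norm (\<lambda>t. w t - u t))"

definition lambda_A_plus :: "(real \<Rightarrow> real) \<Rightarrow> real" where
  "lambda_A_plus w = dist_A_plus w / l2norm w"

definition habs :: "real \<Rightarrow> real \<Rightarrow> real" where
  "habs e t = (if e = 0 then 1 else \<bar>t\<bar> powr e)"

end

theory Submission
  imports Defs
begin

lemma habs_neg[simp]: "habs p (-x) = habs p x"
  by (simp add: habs_def)

lemma J01:
  fixes p :: real and n :: nat
  assumes p: "0 \<le> p"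
  shows "((\<lambda>t. habs p t * t^n) has_integral 1/(p+n+1)) {0..1}"
proof -
  define q where "q = p + real n + 1"
  have q: "q > 0" "q \<ge> 1" using p by (auto simp: q_def)
  define F where "F t = t powr q / q" for t
  have "((\<lambda>t. habs p t * t^n) has_integral (F 1 - F 0)) {0..1}"
  proof (rule fundamental_theorem_of_calculus_interior)
    have c1: "continuous_on {0..1} (\<lambda>t::real. t powr q)"
      by (rule continuous_on_powr'[OF continuous_on_id continuous_on_const]) (use q in auto)
    have c2: "continuous_on {0..1} (\<lambda>t::real. q)" by (rule continuous_on_const)
    show "continuous_on {0..1} F" unfolding F_def
      by (rule continuous_on_divide[OF c1 c2]) (use q in auto)
  next
    fix x :: real assume x: "x \<in> {0<..<1}"
    have "((\<lambda>t. t powr q / q) has_real_derivative (q * x powr (q - 1)) / q) (at x)"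
      using x by (intro DERIV_cdivide has_real_derivative_powr) auto
    moreover have "(q * x powr (q - 1)) / q = habs p x * x^n"
    proof -
      have "(q * x powr (q - 1)) / q = x powr (p + real n)" using q by (simp add: q_def)
      also have "\<dots> = habs p x * x^n"
        using x by (auto simp: habs_def powr_add powr_realpow)
      finally show ?thesis .
    qed
    ultimately show "(F has_vector_derivative habs p x * x^n) (at x)"
      unfolding F_def by (simp add: has_real_derivative_iff_has_vector_derivative)
  qed (rule zero_le_one)
  moreover have "F 1 - F 0 = 1/(p+n+1)" using q by (simp add: F_def q_def)
  ultimately show ?thesis by simp
qed

lemma J11:
  fixes p :: real and n :: nat
  assumes p: "0 \<le> p"
  shows "((\<lambda>t. habs p t * t^n) has_integral (1 + (-1)^n)/(p+n+1)) {-1..1}"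
proof -
  have "((\<lambda>t. (-1)^n * (habs p t * t^n)) has_integral (-1)^n * (1/(p+n+1))) {0..1}"
    using J01[OF p, of n] by (rule has_integral_mult_right)
  moreover have "(\<lambda>t. (-1)^n * (habs p t * t^n)) = (\<lambda>t. habs p (-t) * (-t)^n)"
  proof (rule ext)
    fix t :: real
    show "(-1)^n * (habs p t * t^n) = habs p (-t) * (-t)^n"
      by (simp only: power_minus[of t n] habs_neg mult.left_commute)
  qed
  ultimately have R: "((\<lambda>t. habs p (-t) * (-t)^n) has_integral (-1)^n * (1/(p+n+1))) {- 0..- (- 1)}"
    by (simp only: minus_zero minus_minus)
  have L: "((\<lambda>t. habs p t * t^n) has_integral (-1)^n * (1/(p+n+1))) {-1..0}"
    using R by (rule has_integral_reflect_real[of "\<lambda>t. habs p t * t^n" _ 0 "-1", THEN iffD1])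
  have C: "((\<lambda>t. habs p t * t^n) has_integral (-1)^n * (1/(p+n+1)) + 1/(p+n+1)) {-1..1}"
    by (rule has_integral_combine[OF _ _ L J01[OF p]]) auto
  have eq: "(-1)^n * (1/(p+n+1)) + 1/(p+n+1) = (1 + (-1)^n)/(p+n+1)"
    by (simp add: add_divide_distrib add.commute)
  show ?thesis using C unfolding eq .
qed


lemma habs_bound: "0 \<le> p \<Longrightarrow> \<bar>t\<bar> \<le> 1 \<Longrightarrow> \<bar>habs p t * t^n\<bar> \<le> 1"
proof -
  assume p: "0 \<le> p" and t: "\<bar>t\<bar> \<le> 1"
  have "\<bar>habs p t\<bar> \<le> 1"
  proof (cases "p = 0")
    case False
    have "\<bar>t\<bar> powr p \<le> 1 powr p" by (rule powr_mono2) (use p t in auto)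
    thus ?thesis using False by (simp add: habs_def)
  qed (simp add: habs_def)
  moreover have "\<bar>t^n\<bar> \<le> 1" using t by (simp add: power_abs power_le_one)
  ultimately show ?thesis by (simp add: abs_mult mult_le_one)
qed

lemma habs_meas[measurable]: "habs p \<in> borel_measurable borel"
  unfolding habs_def by measurable

lemma J_int:
  fixes p :: real and n :: nat
  assumes p: "0 \<le> p"
  shows "set_integrable lborel {-1..1} (\<lambda>t. habs p t * t^n)"
  unfolding set_integrable_def
proof (rule integrableI_bounded_set[where A="{-1..1}" and B=1])
  show "AE x in lborel. x \<in> {-1..1} \<longrightarrow> norm (indicator {-1..1} x *\<^sub>R (habs p x * x ^ n)) \<le> 1"
    using habs_bound[OF p] by (auto simp: abs_le_iff)
qed (auto simp: indicator_def)

lemma J_val: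
  fixes p :: real and n :: nat
  assumes p: "0 \<le> p"
  shows "(LINT t:{-1..1}|lborel. habs p t * t^n) = (1 + (-1)^n)/(p+n+1)"
  using set_borel_integral_eq_integral(2)[OF J_int[OF p, of n]] J11[OF p, of n]
  by (simp add: integral_unique)

definition ip :: "(real \<Rightarrow> real) \<Rightarrow> (real \<Rightarrow> real) \<Rightarrow> real" where
  "ip f g = (LINT t:{-1..1}|lborel. f t * g t)"

lemma L2_meas: "L2 f \<Longrightarrow> (\<lambda>t. indicator {-1..1} t * f t) \<in> borel_measurable lborel"
  by (simp add: L2_def)

lemma L2_sq: "L2 f \<Longrightarrow> set_integrable lborel {-1..1::real} (\<lambda>t. f t * f t)"
  by (simp add: L2_def power2_eq_square)

lemma L2_int:
  assumes f: "L2 f" and g: "L2 g"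
  shows "set_integrable lborel {-1..1} (\<lambda>t. f t * g t)"
proof -
  have "set_integrable lborel {-1..1} (\<lambda>t. f t * f t + g t * g t)"
    using L2_sq[OF f] L2_sq[OF g] by (rule set_integral_add)
  thus ?thesis unfolding set_integrable_def
  proof (rule Bochner_Integration.integrable_bound)
    have "(\<lambda>t. (indicator {-1..1} t * f t) * (indicator {-1..1} t * g t)) \<in> borel_measurable lborel"
      by (rule borel_measurable_times[OF L2_meas[OF f] L2_meas[OF g]])
    moreover have "(\<lambda>t. (indicator {-1..1} t * f t) * (indicator {-1..1} t * g t)) =
        (\<lambda>t. indicator {-1..1} t *\<^sub>R (f t * g t))"
      by (auto simp: indicator_def fun_eq_iff)
    ultimately show "(\<lambda>t. indicator {-1..1} t *\<^sub>R (f t * g t)) \<in> borel_measurable lborel" by simp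
  next
    have "\<bar>f t * g t\<bar> \<le> \<bar>f t * f t + g t * g t\<bar>" for t
    proof -
      have "2 * \<bar>f t\<bar> * \<bar>g t\<bar> \<le> \<bar>f t\<bar>^2 + \<bar>g t\<bar>^2" by (rule sum_squares_bound)
      moreover have "0 \<le> \<bar>f t\<bar> * \<bar>g t\<bar>" by simp
      moreover have "\<bar>f t\<bar>^2 + \<bar>g t\<bar>^2 = f t * f t + g t * g t" by (simp add: power2_eq_square)
      ultimately have "\<bar>f t\<bar> * \<bar>g t\<bar> \<le> f t * f t + g t * g t"
        by linarith
      hence "\<bar>f t * g t\<bar> \<le> f t * f t + g t * g t"
        by (simp add: abs_mult)
      thus ?thesis by linarith
    qed
    thus "AE x in lborel. norm (indicator {-1..1} x *\<^sub>R (f x * g x)) \<le> norm (indicator {-1..1} x *\<^sub>R (f x * f x + g x * g x))"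
      by (intro AE_I2) (simp split: split_indicator)
  qed
qed

lemma L2_add: "L2 f \<Longrightarrow> L2 g \<Longrightarrow> L2 (\<lambda>t. f t + g t)"
proof -
  assume f: "L2 f" and g: "L2 g"
  have m: "(\<lambda>t. indicator {-1..1} t * (f t + g t)) = (\<lambda>t. indicator {-1..1} t * f t + indicator {-1..1} t * g t)"
    by (simp add: fun_eq_iff algebra_simps)
  have "set_integrable lborel {-1..1::real} (\<lambda>t. f t * f t + 2 * (f t * g t) + g t * g t)"
    using L2_sq[OF f] L2_sq[OF g] L2_int[OF f g] by (intro set_integral_add set_integrable_mult_right) auto
  moreover have "(\<lambda>t. f t * f t + 2 * (f t * g t) + g t * g t) = (\<lambda>t. (f t + g t)^2)"
    by (simp add: fun_eq_iff power2_eq_square algebra_simps)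
  ultimately show ?thesis unfolding L2_def m using L2_meas[OF f] L2_meas[OF g] by auto
qed

lemma L2_scale: "L2 f \<Longrightarrow> L2 (\<lambda>t. c * f t)"
proof -
  assume f: "L2 f"
  have m: "(\<lambda>t. indicator {-1..1} t * (c * f t)) = (\<lambda>t. c * (indicator {-1..1} t * f t))"
    by (simp add: fun_eq_iff algebra_simps)
  have "set_integrable lborel {-1..1::real} (\<lambda>t. c^2 * (f t * f t))"
    using L2_sq[OF f] by (intro set_integrable_mult_right) auto
  moreover have "(\<lambda>t. c^2 * (f t * f t)) = (\<lambda>t. (c * f t)^2)"
    by (simp add: fun_eq_iff power2_eq_square algebra_simps)
  ultimately show ?thesis unfolding L2_def m using L2_meas[OF f] by auto
qed

lemma L2_diff: "L2 f \<Longrightarrow> L2 g \<Longrightarrow> L2 (\<lambda>t. f t - g t)"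
  using L2_add[of f "\<lambda>t. (-1) * g t"] L2_scale[of g "-1"] by simp

lemma habs_double: "habs (2*p) t = habs p t * habs p t"
proof -
  have "\<bar>t\<bar> powr (2*p) = \<bar>t\<bar> powr p * \<bar>t\<bar> powr p"
    using powr_add[of "\<bar>t\<bar>" p p] by (simp only: mult_2)
  thus ?thesis unfolding habs_def by simp
qed

lemma L2_habs: "0 \<le> p \<Longrightarrow> L2 (\<lambda>t. habs p t * t^n)"
proof -
  assume p: "0 \<le> p"
  have "set_integrable lborel {-1..1::real} (\<lambda>t. habs (2*p) t * t^(2*n))"
    by (rule J_int) (use p in simp)
  moreover have "habs (2*p) t * t^(2*n) = (habs p t * t^n)^2" for t
  proof -
    have "habs (2*p) t = habs p t * habs p t" by (rule habs_double)
    moreover have "t^(2*n) = t^n * t^n" by (simp only: mult_2 power_add)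
    ultimately show ?thesis by (simp only: power2_eq_square mult_ac)
  qed
  moreover have "(\<lambda>t. indicator {-1..1} t * (habs p t * t^n)) \<in> borel_measurable lborel"
    by measurable
  ultimately show ?thesis unfolding L2_def by simp
qed


lemma ip_nonneg: "0 \<le> ip f f"
  unfolding ip_def set_lebesgue_integral_def
  by (rule Bochner_Integration.integral_nonneg) (simp split: split_indicator)

lemma l2norm_ip: "l2norm f = sqrt (ip f f)"
  by (simp add: l2norm_def ip_def power2_eq_square)

lemma ip_comm: "ip f g = ip g f"
  by (simp add: ip_def mult.commute)

lemma ip_add_right: "L2 f \<Longrightarrow> L2 g \<Longrightarrow> L2 k \<Longrightarrow> ip f (\<lambda>t. g t + k t) = ip f g + ip f k"
  unfolding ip_def by (simp add: distrib_left set_integral_add(2)[OF L2_int L2_int])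

lemma ip_diff_right: "L2 f \<Longrightarrow> L2 g \<Longrightarrow> L2 k \<Longrightarrow> ip f (\<lambda>t. g t - k t) = ip f g - ip f k"
  unfolding ip_def by (simp add: right_diff_distrib set_integral_diff(2)[OF L2_int L2_int])

lemma ip_scale_right: "ip f (\<lambda>t. c * g t) = c * ip f g"
proof -
  have "ip f (\<lambda>t. c * g t) = (LINT t:{-1..1}|lborel. c * (f t * g t))"
    unfolding ip_def by (simp add: algebra_simps)
  thus ?thesis unfolding ip_def by simp
qed

lemma ip_sq_add: "L2 f \<Longrightarrow> L2 g \<Longrightarrow> ip (\<lambda>t. f t + g t) (\<lambda>t. f t + g t) = ip f f + 2 * ip f g + ip g g"
proof -
  assume f: "L2 f" and g: "L2 g"
  have "ip (\<lambda>t. f t + g t) (\<lambda>t. f t + g t) = ip (\<lambda>t. f t + g t) f + ip (\<lambda>t. f t + g t) g"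
    using f g by (simp add: ip_add_right L2_add)
  also have "ip (\<lambda>t. f t + g t) f = ip f f + ip g f"
    using f g ip_comm[of f g] by (subst ip_comm) (simp add: ip_add_right)
  also have "ip (\<lambda>t. f t + g t) g = ip f g + ip g g"
    using f g ip_comm[of g f] by (subst ip_comm) (simp add: ip_add_right)
  finally show ?thesis using ip_comm[of g f] by simp
qed

lemma young:
  assumes f: "L2 f" and g: "L2 g" and c: "0 < c"
  shows "2 * \<bar>ip f g\<bar> \<le> c * ip f f + ip g g / c"
proof -
  have I1: "set_integrable lborel {-1..1} (\<lambda>t. 2 * (f t * g t))"
    using L2_int[OF f g] by auto
  have I2: "set_integrable lborel {-1..1} (\<lambda>t. c * (f t * f t) + (g t * g t) / c)"
    using L2_int[OF f f] L2_int[OF g g] c by (intro set_integral_add) auto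
  have I3: "set_integrable lborel {-1..1} (\<lambda>t. - (2 * (f t * g t)))"
    using I1 unfolding set_integrable_def by simp
  have pw: "2 * \<bar>f t * g t\<bar> \<le> c * (f t * f t) + (g t * g t) / c" for t
  proof -
    have "0 \<le> (c * \<bar>f t\<bar> - \<bar>g t\<bar>)^2 / c" using c by simp
    also have "(c * \<bar>f t\<bar> - \<bar>g t\<bar>)^2 / c = c * (f t * f t) + (g t * g t) / c - 2 * \<bar>f t * g t\<bar>"
      using c by (simp add: field_simps power2_eq_square abs_mult)
    finally show ?thesis by simp
  qed
  have "(LINT t:{-1..1}|lborel. 2 * (f t * g t)) \<le> (LINT t:{-1..1}|lborel. c * (f t * f t) + (g t * g t) / c)"
    using pw by (intro set_integral_mono[OF I1 I2]) (smt (verit) abs_ge_self)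
  moreover have "(LINT t:{-1..1}|lborel. - (2 * (f t * g t))) \<le> (LINT t:{-1..1}|lborel. c * (f t * f t) + (g t * g t) / c)"
    using pw by (intro set_integral_mono[OF I3 I2]) (smt (verit) abs_ge_minus_self)
  moreover have "(LINT t:{-1..1}|lborel. c * (f t * f t) + (g t * g t) / c) = c * ip f f + ip g g / c"
    unfolding ip_def using L2_int[OF f f] L2_int[OF g g]
    by (subst set_integral_add(2)) (auto simp: set_integrable_mult_right)
  moreover have "(LINT t:{-1..1}|lborel. - (2 * (f t * g t))) = - (2 * ip f g)"
    unfolding ip_def by (simp add: set_integral_uminus[OF I1])
  moreover have "(LINT t:{-1..1}|lborel. 2 * (f t * g t)) = 2 * ip f g"
    unfolding ip_def by simp
  ultimately show ?thesis by linarith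
qed

lemma ip_limit:
  assumes r: "L2 r" and v: "L2 v" and p: "\<And>N. L2 (p N)" and neg: "\<And>N. ip r (p N) \<le> 0"
    and lim: "(\<lambda>N. l2norm (\<lambda>t. v t - p N t)) \<longlonglongrightarrow> 0"
  shows "ip r v \<le> 0"
proof (rule ccontr)
  assume "\<not> ip r v \<le> 0"
  hence d: "ip r v > 0" by simp
  define K where "K = ip r r"
  have K: "0 \<le> K" unfolding K_def by (rule ip_nonneg)
  define c where "c = ip r v / (K + 1)"
  have c: "0 < c" using d K by (simp add: c_def)
  have cK: "c * K < ip r v" using d K unfolding c_def by (simp add: field_simps)
  have "0 < sqrt (c * ip r v)" using c d by simp
  then obtain N where N: "\<bar>l2norm (\<lambda>t. v t - p N t) - 0\<bar> < sqrt (c * ip r v)"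
    using lim unfolding LIMSEQ_def dist_real_def by blast
  define w where "w = (\<lambda>t. v t - p N t)"
  have w: "L2 w" unfolding w_def by (rule L2_diff[OF v p])
  have "l2norm w = sqrt (ip w w)" by (rule l2norm_ip)
  moreover have "0 \<le> sqrt (ip w w)" using ip_nonneg[of w] by simp
  ultimately have "sqrt (ip w w) < sqrt (c * ip r v)" using N by (simp add: w_def)
  hence ww: "ip w w < c * ip r v" by (simp only: real_sqrt_less_iff)
  have "2 * \<bar>ip r w\<bar> \<le> c * ip r r + ip w w / c" by (rule young[OF r w c])
  also have "ip w w / c < ip r v" using ww c by (simp add: field_simps)
  finally have "2 * \<bar>ip r w\<bar> < 2 * ip r v" using cK unfolding K_def by linarith
  moreover have "ip r w = ip r v - ip r (p N)" unfolding w_def by (rule ip_diff_right[OF r v p])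
  ultimately have "ip r (p N) > 0" by linarith
  with neg[of N] show False by simp
qed

lemma frac3:
  fixes D E1 E2 E3 X Y :: real
  assumes "D \<noteq> 0" "E1 \<noteq> 0" "E2 \<noteq> 0" "E3 \<noteq> 0"
  shows "2/E1 - X/(D*E2) - Y/(D*E3) = (2*D*E2*E3 - X*E1*E3 - Y*E1*E2)/(D*E1*E2*E3)"
  using assms by (simp add: field_simps)

lemma key_poly:
  fixes c \<alpha> u :: real
  shows "2*((c+\<alpha>)*(c+2+\<alpha>))*(c+2*u)*(c+2+2*u) - (c*(c+2)*(2-\<alpha>))*(c+\<alpha>+2*u)*(c+2+2*u)
     - ((c+2)*(c+4)*\<alpha>)*(c+\<alpha>+2*u)*(c+2*u) = -8*\<alpha>*(2-\<alpha>)*u*(u-1)"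
  by algebra

lemma key_id:
  fixes \<alpha> x y a b :: real
  assumes "0 \<le> \<alpha>" "0 \<le> x" "0 \<le> y"
    and a: "a = (4*x+1)*(4*x+3) / ((4*x+1+\<alpha>)*(4*x+3+\<alpha>)) * ((2-\<alpha>)/2)"
    and b: "b = (4*x+3)*(4*x+5) / ((4*x+1+\<alpha>)*(4*x+3+\<alpha>)) * (\<alpha>/2)"
  shows "2/(2*x+\<alpha>+2*y+1) - a*(2/(2*x+2*y+1)) - b*(2/(2*x+2*y+3)) =
    -(8*\<alpha>*(2-\<alpha>)*(y-x)*(y-x-1)) / (((4*x+1+\<alpha>)*(4*x+3+\<alpha>))*(2*x+\<alpha>+2*y+1)*(2*x+2*y+1)*(2*x+2*y+3))"
proof -
  define c where "c = 4*x+1"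
  define u where "u = y - x"
  define D where "D = (c+\<alpha>)*(c+2+\<alpha>)"
  have D: "D \<noteq> 0" using assms(1-3) by (auto simp: D_def c_def)
  have E: "c+\<alpha>+2*u \<noteq> 0" "c+2*u \<noteq> 0" "c+2+2*u \<noteq> 0" using assms(1-3) by (auto simp: c_def u_def)
  have e1: "2*x+\<alpha>+2*y+1 = c+\<alpha>+2*u" "2*x+2*y+1 = c+2*u" "2*x+2*y+3 = c+2+2*u"
    "(4*x+1+\<alpha>)*(4*x+3+\<alpha>) = D" "4*x+1 = c" "4*x+3 = c+2" "4*x+5 = c+4" "y - x = u"
    by (auto simp: c_def u_def D_def algebra_simps)
  have "a*(2/(c+2*u)) = (c*(c+2)*(2-\<alpha>))/(D*(c+2*u))" unfolding a e1 by (simp add: D_def)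
  moreover have "b*(2/(c+2+2*u)) = ((c+2)*(c+4)*\<alpha>)/(D*(c+2+2*u))" unfolding b e1 by (simp add: D_def)
  ultimately have "2/(c+\<alpha>+2*u) - a*(2/(c+2*u)) - b*(2/(c+2+2*u)) =
     (2*D*(c+2*u)*(c+2+2*u) - (c*(c+2)*(2-\<alpha>))*(c+\<alpha>+2*u)*(c+2+2*u) - ((c+2)*(c+4)*\<alpha>)*(c+\<alpha>+2*u)*(c+2*u))
       / (D*(c+\<alpha>+2*u)*(c+2*u)*(c+2+2*u))"
    using frac3[OF D E] by simp
  also have "\<dots> = -8*\<alpha>*(2-\<alpha>)*u*(u-1) / (D*(c+\<alpha>+2*u)*(c+2*u)*(c+2+2*u))"
    unfolding D_def using key_poly[of c \<alpha> u] by (simp add: mult.assoc)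
  finally show ?thesis unfolding e1 by (simp add: mult.assoc D_def)
qed

lemma dist_poly:
  fixes c \<alpha> :: real
  shows "2*((c+\<alpha>)*(c+2+\<alpha>))^2 - (c*(c+2)*(2-\<alpha>))*(c+2*\<alpha>)*(c+2+\<alpha>)
     - ((c+2)*(c+4)*\<alpha>)*(c+2*\<alpha>)*(c+\<alpha>) = 2*(\<alpha>*(2-\<alpha>))^2"
  by algebra

lemma frac_d:
  fixes P Q F X Y Z :: real
  assumes "P \<noteq> 0" "Q \<noteq> 0" "F \<noteq> 0" and h: "2*(P*Q)^2 - X*F*Q - Y*F*P = 2*Z^2"
  shows "2/F - X/((P*Q)*P) - Y/((P*Q)*Q) = (Z/(P*Q))^2*(2/F)"
proof -
  have "2/F - X/((P*Q)*P) - Y/((P*Q)*Q) = (2*(P*Q)^2 - X*F*Q - Y*F*P)/((P*Q)^2*F)"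
    using assms(1-3) by (simp add: field_simps power2_eq_square)
  also have "\<dots> = 2*Z^2/((P*Q)^2*F)" by (simp only: h)
  also have "\<dots> = (Z/(P*Q))^2*(2/F)" by (simp add: power_divide)
  finally show ?thesis .
qed

lemma dist_id:
  fixes \<alpha> x a b :: real
  assumes "0 \<le> \<alpha>" "0 \<le> x"
    and a: "a = (4*x+1)*(4*x+3) / ((4*x+1+\<alpha>)*(4*x+3+\<alpha>)) * ((2-\<alpha>)/2)"
    and b: "b = (4*x+3)*(4*x+5) / ((4*x+1+\<alpha>)*(4*x+3+\<alpha>)) * (\<alpha>/2)"
  shows "2/(4*x+2*\<alpha>+1) - a*(2/(4*x+1+\<alpha>)) - b*(2/(4*x+3+\<alpha>)) =
    (\<alpha>*(2-\<alpha>)/((4*x+1+\<alpha>)*(4*x+3+\<alpha>)))^2 * (2/(4*x+2*\<alpha>+1))"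
proof -
  define c where "c = 4*x+1"
  define P where "P = c+\<alpha>"
  define Q where "Q = c+2+\<alpha>"
  define F where "F = c+2*\<alpha>"
  have nz: "P \<noteq> 0" "Q \<noteq> 0" "F \<noteq> 0" using assms(1-2) by (auto simp: c_def P_def Q_def F_def)
  have e1: "4*x+2*\<alpha>+1 = F" "4*x+1+\<alpha> = P" "4*x+3+\<alpha> = Q"
    "4*x+1 = c" "4*x+3 = c+2" "4*x+5 = c+4"
    by (auto simp: c_def P_def Q_def F_def algebra_simps)
  have h: "2*(P*Q)^2 - (c*(c+2)*(2-\<alpha>))*F*Q - ((c+2)*(c+4)*\<alpha>)*F*P = 2*(\<alpha>*(2-\<alpha>))^2"
    unfolding P_def Q_def F_def by (rule dist_poly)
  have "a*(2/P) = (c*(c+2)*(2-\<alpha>))/((P*Q)*P)" unfolding a e1 using nz by (simp add: P_def Q_def)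
  moreover have "b*(2/Q) = ((c+2)*(c+4)*\<alpha>)/((P*Q)*Q)" unfolding b e1 using nz by (simp add: P_def Q_def)
  ultimately show ?thesis unfolding e1 using frac_d[OF nz h] by (simp add: P_def Q_def)
qed

lemma L2_pow: "L2 (\<lambda>t. t^n)"
  using L2_habs[of 0 n] by (simp add: habs_def)

lemma L2_habs0: "0 \<le> p \<Longrightarrow> L2 (habs p)"
  using L2_habs[of p 0] by simp

lemma L2_poly: "L2 (\<lambda>t. \<Sum>n<N. c n * t^n)"
proof (induction N)
  case 0
  then show ?case using L2_scale[OF L2_pow[of 0], of 0] by simp
next
  case (Suc N)
  then show ?case using L2_add[OF Suc L2_scale[OF L2_pow[of N], of "c N"]] by simp
qed

lemma ip_poly: "L2 r \<Longrightarrow> ip r (\<lambda>t. \<Sum>n<N. c n * t^n) = (\<Sum>n<N. c n * ip r (\<lambda>t. t^n))"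
proof (induction N)
  case 0
  then show ?case using ip_scale_right[of r 0 "\<lambda>t. 1"] by simp
next
  case (Suc N)
  have "ip r (\<lambda>t. \<Sum>n<Suc N. c n * t^n) = ip r (\<lambda>t. (\<Sum>n<N. c n * t^n) + c N * t^N)" by simp
  also have "\<dots> = ip r (\<lambda>t. \<Sum>n<N. c n * t^n) + ip r (\<lambda>t. c N * t^N)"
    by (rule ip_add_right[OF Suc.prems L2_poly L2_scale[OF L2_pow]])
  finally show ?case using Suc by (simp add: ip_scale_right)
qed


lemma ip_r_pow:
  fixes \<alpha> a b :: real and m n :: nat
  assumes "0 \<le> \<alpha>"
  shows "ip (\<lambda>t. habs (2*real m+\<alpha>) t - (a * t^(2*m) + b * t^(2*m+2))) (\<lambda>t. t^n)
    = (1 + (-1)^n)/(2*real m+\<alpha>+n+1) - a*((1+(-1)^n)/(2*real m+n+1)) - b*((1+(-1)^n)/(2*real m+n+3))"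
proof -
  let ?e = "2*real m+\<alpha>"
  have e: "0 \<le> ?e" using assms by simp
  have pw: "(habs ?e t - (a * t^(2*m) + b * t^(2*m+2))) * t^n =
     habs ?e t * t^n - (a * (habs 0 t * t^(2*m+n)) + b * (habs 0 t * t^(2*m+2+n)))" for t
    by (simp add: habs_def algebra_simps power_add)
  have "ip (\<lambda>t. habs ?e t - (a * t^(2*m) + b * t^(2*m+2))) (\<lambda>t. t^n) =
     (LINT t:{-1..1}|lborel. habs ?e t * t^n - (a * (habs 0 t * t^(2*m+n)) + b * (habs 0 t * t^(2*m+2+n))))"
    unfolding ip_def pw ..
  also have "\<dots> = (LINT t:{-1..1}|lborel. habs ?e t * t^n) - (a * (LINT t:{-1..1}|lborel. habs 0 t * t^(2*m+n))
      + b * (LINT t:{-1..1}|lborel. habs 0 t * t^(2*m+2+n)))"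
    using J_int[OF e, of n] J_int[of 0 "2*m+n"] J_int[of 0 "2*m+2+n"]
    by (simp add: set_integral_diff(2) set_integral_add(2) set_integrable_mult_right)
  also have "\<dots> = (1 + (-1)^n)/(?e+n+1) - a*((1+(-1)^n)/(2*real m+n+1)) - b*((1+(-1)^n)/(2*real m+n+3))"
  proof -
    have v2: "(LINT t:{-1..1}|lborel. habs 0 t * t^(2*m+n)) = (1+(-1)^n)/(2*real m+n+1)"
      using J_val[of 0 "2*m+n"] by (simp add: power_add)
    have v3: "(LINT t:{-1..1}|lborel. habs 0 t * t^(2*m+2+n)) = (1+(-1)^n)/(2*real m+n+3)"
      using J_val[of 0 "2*m+2+n"] by (simp add: power_add add_ac)
    show ?thesis unfolding v2 v3 J_val[OF e] by simp
  qed
  finally show ?thesis by simp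
qed

lemma consec_nonneg: "0 \<le> (real k - real m) * (real k - real m - 1)"
proof (cases "k \<le> m")
  case True
  then show ?thesis by (intro mult_nonpos_nonpos) auto
next
  case False
  then show ?thesis by (intro mult_nonneg_nonneg) auto
qed


lemma us_in_A:
  fixes a b :: real and m :: nat
  assumes "0 \<le> a" "0 \<le> b"
  shows "(\<lambda>t. a * t^(2*m) + b * t^(2*m+2)) \<in> A_plus"
proof -
  define c where "c = (\<lambda>n. if n = 2*m then a else if n = 2*m+2 then b else 0)"
  have c: "\<forall>n. 0 \<le> c n" using assms by (simp add: c_def)
  have L: "L2 (\<lambda>t. a * t^(2*m) + b * t^(2*m+2))"
    by (intro L2_add L2_scale L2_pow)
  have "eventually (\<lambda>N. l2norm (\<lambda>t. a * t^(2*m) + b * t^(2*m+2) - (\<Sum>n<N. c n * t^n)) = 0) sequentially"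
    unfolding eventually_sequentially
  proof (intro exI allI impI)
    fix N assume N: "2*m+3 \<le> N"
    have "(\<Sum>n<N. c n * t^n) = a * t^(2*m) + b * t^(2*m+2)" for t
    proof -
      have "(\<Sum>n<N. c n * t^n) = (\<Sum>n<N. (if n = 2*m then a * t^(2*m) else 0) + (if n = 2*m+2 then b * t^(2*m+2) else 0))"
        by (rule sum.cong) (auto simp: c_def)
      also have "\<dots> = a * t^(2*m) + b * t^(2*m+2)"
        using N by (simp add: sum.distrib)
      finally show ?thesis .
    qed
    thus "l2norm (\<lambda>t. a * t^(2*m) + b * t^(2*m+2) - (\<Sum>n<N. c n * t^n)) = 0"
      by (simp add: l2norm_def)
  qed
  hence "(\<lambda>N. l2norm (\<lambda>t. a * t^(2*m) + b * t^(2*m+2) - (\<Sum>n<N. c n * t^n))) \<longlonglongrightarrow> 0"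
    by (rule tendsto_eventually)
  thus ?thesis unfolding A_plus_def using L c by blast
qed

theorem proposition1p6:
  fixes \<alpha> :: real and m :: nat
  assumes "0 \<le> \<alpha>" and "\<alpha> < 2"
  defines "a \<equiv> (4*real m+1)*(4*real m+3) / ((4*real m+1+\<alpha>)*(4*real m+3+\<alpha>)) * ((2-\<alpha>)/2)"
      and "b \<equiv> (4*real m+3)*(4*real m+5) / ((4*real m+1+\<alpha>)*(4*real m+3+\<alpha>)) * (\<alpha>/2)"
      and "h \<equiv> habs (2*real m+\<alpha>)"
  shows "is_proj_A_plus h (\<lambda>t. a * t^(2*m) + b * t^(2*m+2)) \<and>
    (\<forall>u. is_proj_A_plus h u \<longrightarrow>
           (AE t in lborel. t \<in> {-1..1} \<longrightarrow> u t = a * t^(2*m) + b * t^(2*m+2))) \<and>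
    dist_A_plus h = sqrt 2 * \<alpha> * (2-\<alpha>) /
           ((4*real m+\<alpha>+1)*(4*real m+\<alpha>+3) * sqrt (4*real m+2*\<alpha>+1)) \<and>
    lambda_A_plus h = \<alpha> * (2-\<alpha>) / ((4*real m+\<alpha>+1)*(4*real m+\<alpha>+3))"
proof -
  define e where "e = 2*real m+\<alpha>"
  define us where "us = (\<lambda>t::real. a * t^(2*m) + b * t^(2*m+2))"
  define r where "r = (\<lambda>t. h t - us t)"
  have e0: "0 \<le> e" using assms(1) by (simp add: e_def)
  have hdef: "h = habs e" by (simp add: h_def e_def)
  have a0: "0 \<le> a" unfolding a_def using assms by (intro mult_nonneg_nonneg divide_nonneg_nonneg) auto
  have b0: "0 \<le> b" unfolding b_def using assms by (intro mult_nonneg_nonneg divide_nonneg_nonneg) auto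
  have Lh: "L2 h" unfolding hdef by (rule L2_habs0[OF e0])
  have Lus: "L2 us" unfolding us_def by (intro L2_add L2_scale L2_pow)
  have Lr: "L2 r" unfolding r_def by (rule L2_diff[OF Lh Lus])
  have ipn: "ip r (\<lambda>t. t^n) = (1 + (-1)^n)/(2*real m+\<alpha>+n+1) - a*((1+(-1)^n)/(2*real m+n+1)) - b*((1+(-1)^n)/(2*real m+n+3))" for n
    unfolding r_def us_def h_def by (rule ip_r_pow[OF assms(1)])
  have keyk: "ip r (\<lambda>t. t^(2*k)) = -(8*\<alpha>*(2-\<alpha>)*(real k - real m)*(real k - real m - 1)) /
      (((4*real m+1+\<alpha>)*(4*real m+3+\<alpha>))*(2*real m+\<alpha>+2*real k+1)*(2*real m+2*real k+1)*(2*real m+2*real k+3))" for k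
  proof -
    have "ip r (\<lambda>t. t^(2*k)) = 2/(2*real m+\<alpha>+2*real k+1) - a*(2/(2*real m+2*real k+1)) - b*(2/(2*real m+2*real k+3))"
      using ipn[of "2*k"] by simp
    also have "\<dots> = -(8*\<alpha>*(2-\<alpha>)*(real k - real m)*(real k - real m - 1)) /
      (((4*real m+1+\<alpha>)*(4*real m+3+\<alpha>))*(2*real m+\<alpha>+2*real k+1)*(2*real m+2*real k+1)*(2*real m+2*real k+3))"
      by (rule key_id[OF assms(1) _ _ a_def[THEN meta_eq_to_obj_eq] b_def[THEN meta_eq_to_obj_eq]]) auto
    finally show ?thesis .
  qed
  have ineq: "ip r (\<lambda>t. t^n) \<le> 0" for n
  proof (cases "even n")
    case True
    then obtain k where k: "n = 2*k" by blast
    have N0: "0 \<le> 8*\<alpha>*(2-\<alpha>)*((real k - real m)*(real k - real m - 1))"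
    proof (rule mult_nonneg_nonneg)
      show "0 \<le> 8*\<alpha>*(2-\<alpha>)" using assms by simp
    qed (rule consec_nonneg)
    have N: "0 \<le> 8*\<alpha>*(2-\<alpha>)*(real k - real m)*(real k - real m - 1)"
      using N0 by (simp only: mult.assoc)
    have P: "0 < ((4*real m+1+\<alpha>)*(4*real m+3+\<alpha>))*(2*real m+\<alpha>+2*real k+1)*(2*real m+2*real k+1)*(2*real m+2*real k+3)"
      using assms by (intro mult_pos_pos) auto
    show ?thesis unfolding k keyk
      by (rule divide_nonpos_pos[OF _ P]) (use N in linarith)
  next
    case False
    then show ?thesis by (simp add: ipn)
  qed
  have ip_us: "ip r us = 0"
  proof -
    have k1: "(\<lambda>t::real. t^(2*m+2)) = (\<lambda>t. t^(2*(m+1)))" by simp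
    have z0: "ip r (\<lambda>t. t^(2*m)) = 0" unfolding keyk by simp
    have z1: "ip r (\<lambda>t. t^(2*m+2)) = 0" unfolding k1 keyk by simp
    have "ip r us = ip r (\<lambda>t. a * t^(2*m)) + ip r (\<lambda>t. b * t^(2*m+2))"
      unfolding us_def by (rule ip_add_right[OF Lr L2_scale[OF L2_pow] L2_scale[OF L2_pow]]) 
    also have "\<dots> = 0" unfolding ip_scale_right z0 z1 by simp
    finally show ?thesis .
  qed
  have ip_v: "ip r v \<le> 0" if v: "v \<in> A_plus" for v
  proof -
    have vv: "L2 v \<and> (\<exists>c::nat \<Rightarrow> real. (\<forall>n. 0 \<le> c n) \<and>
        (\<lambda>N. l2norm (\<lambda>t. v t - (\<Sum>n<N. c n * t ^ n))) \<longlonglongrightarrow> 0)"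
      using v unfolding A_plus_def by (rule CollectD)
    then obtain c where Lv: "L2 v" and c: "\<forall>n. 0 \<le> c n"
      and lim: "(\<lambda>N. l2norm (\<lambda>t. v t - (\<Sum>n<N. c n * t ^ n))) \<longlonglongrightarrow> 0"
      by blast
    show ?thesis
    proof (rule ip_limit[OF Lr Lv _ _ lim])
      show "L2 (\<lambda>t. \<Sum>n<N. c n * t^n)" for N by (rule L2_poly)
      show "ip r (\<lambda>t. \<Sum>n<N. c n * t^n) \<le> 0" for N
        unfolding ip_poly[OF Lr] using c ineq by (intro sum_nonpos mult_nonneg_nonpos) auto
    qed
  qed
  have ge: "ip r r + ip (\<lambda>t. us t - v t) (\<lambda>t. us t - v t) \<le> ip (\<lambda>t. h t - v t) (\<lambda>t. h t - v t)"
    if v: "v \<in> A_plus" for v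
  proof -
    have Lv: "L2 v" using v by (simp add: A_plus_def)
    have "(\<lambda>t. h t - v t) = (\<lambda>t. r t + (us t - v t))" by (simp add: r_def fun_eq_iff)
    hence "ip (\<lambda>t. h t - v t) (\<lambda>t. h t - v t) = ip r r + 2 * ip r (\<lambda>t. us t - v t) + ip (\<lambda>t. us t - v t) (\<lambda>t. us t - v t)"
      using ip_sq_add[OF Lr L2_diff[OF Lus Lv]] by simp
    moreover have "ip r (\<lambda>t. us t - v t) = ip r us - ip r v" by (rule ip_diff_right[OF Lr Lus Lv])
    ultimately show ?thesis using ip_us ip_v[OF v] by simp
  qed
  have us_in: "us \<in> A_plus" unfolding us_def by (rule us_in_A[OF a0 b0])
  have opt: "l2norm r \<le> l2norm (\<lambda>t. h t - v t)" if v: "v \<in> A_plus" for v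
    using ge[OF v] ip_nonneg[of "\<lambda>t. us t - v t"] by (simp add: l2norm_ip)
  have proj: "is_proj_A_plus h us"
    unfolding is_proj_A_plus_def using us_in opt by (simp add: r_def)
  have uniq: "AE t in lborel. t \<in> {-1..1} \<longrightarrow> u t = us t" if u: "is_proj_A_plus h u" for u
  proof -
    have uA: "u \<in> A_plus" and le: "l2norm (\<lambda>t. h t - u t) \<le> l2norm r"
      using u us_in unfolding is_proj_A_plus_def r_def by auto
    have Lu: "L2 u" using uA by (simp add: A_plus_def)
    have "ip (\<lambda>t. h t - u t) (\<lambda>t. h t - u t) \<le> ip r r"
      using le by (simp add: l2norm_ip)
    hence "ip (\<lambda>t. us t - u t) (\<lambda>t. us t - u t) \<le> 0" using ge[OF uA] by simp
    hence z: "ip (\<lambda>t. us t - u t) (\<lambda>t. us t - u t) = 0" using ip_nonneg by (metis order.antisym)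
    define d where "d = (\<lambda>t. indicator {-1..1} t *\<^sub>R ((us t - u t) * (us t - u t)))"
    have di: "integrable lborel d"
      using L2_int[OF L2_diff[OF Lus Lu] L2_diff[OF Lus Lu]] unfolding d_def set_integrable_def by simp
    have "integral\<^sup>L lborel d = 0" using z unfolding d_def ip_def set_lebesgue_integral_def by simp
    hence "AE t in lborel. d t = 0"
      using integral_nonneg_eq_0_iff_AE[OF di] by (simp add: d_def split: split_indicator)
    thus ?thesis by eventually_elim (auto simp: d_def split: split_indicator)
  qed
  have hh: "ip h h = 2/(4*real m+2*\<alpha>+1)"
  proof -
    have "ip h h = (LINT t:{-1..1}|lborel. habs (2*e) t * t^0)"
      unfolding ip_def hdef by (simp add: habs_double)
    also have "\<dots> = (1 + (-1)^0)/(2*e+real 0+1)"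
      by (rule J_val) (use e0 in simp)
    also have "\<dots> = 2/(4*real m+2*\<alpha>+1)" by (simp add: e_def algebra_simps)
    finally show ?thesis .
  qed
  have hpow: "ip h (\<lambda>t. t^n) = (1 + (-1)^n)/(e+n+1)" for n
    unfolding ip_def hdef using J_val[OF e0] by simp
  have hus: "ip h us = a*(2/(4*real m+1+\<alpha>)) + b*(2/(4*real m+3+\<alpha>))"
  proof -
    have w0: "ip h (\<lambda>t. t^(2*m)) = 2/(4*real m+1+\<alpha>)"
      unfolding hpow by (simp add: e_def algebra_simps)
    have w1: "ip h (\<lambda>t. t^(2*m+2)) = 2/(4*real m+3+\<alpha>)"
      unfolding hpow by (simp add: e_def algebra_simps)
    have "ip h us = ip h (\<lambda>t. a * t^(2*m)) + ip h (\<lambda>t. b * t^(2*m+2))"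
      unfolding us_def by (rule ip_add_right[OF Lh L2_scale[OF L2_pow] L2_scale[OF L2_pow]])
    also have "\<dots> = a*(2/(4*real m+1+\<alpha>)) + b*(2/(4*real m+3+\<alpha>))"
      by (simp only: ip_scale_right w0 w1)
    finally show ?thesis .
  qed
  define L where "L = \<alpha>*(2-\<alpha>)/((4*real m+1+\<alpha>)*(4*real m+3+\<alpha>))"
  define G where "G = 2/(4*real m+2*\<alpha>+1)"
  have L0: "0 \<le> L" unfolding L_def using assms by auto
  have G0: "0 < G" unfolding G_def using assms by auto
  have rr: "ip r r = L^2 * G"
  proof -
    have rr0: "ip r (\<lambda>t. h t - us t) = ip r h - ip r us" by (rule ip_diff_right[OF Lr Lh Lus])
    have "ip r r = ip r h - ip r us" using rr0 by (simp only: r_def[symmetric])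
    also have "ip r h = ip h r" by (rule ip_comm)
    also have "ip h r = ip h h - ip h us" unfolding r_def by (rule ip_diff_right[OF Lh Lh Lus])
    finally have "ip r r = 2/(4*real m+2*\<alpha>+1) - a*(2/(4*real m+1+\<alpha>)) - b*(2/(4*real m+3+\<alpha>))"
      using ip_us hh hus by simp
    also have "\<dots> = L^2 * G" unfolding L_def G_def
      by (rule dist_id[OF assms(1) _ a_def[THEN meta_eq_to_obj_eq] b_def[THEN meta_eq_to_obj_eq]]) auto
    finally show ?thesis .
  qed
  have nr: "l2norm r = L * sqrt G"
    using L0 by (simp add: l2norm_ip rr real_sqrt_mult)
  have nh: "l2norm h = sqrt G" by (simp add: l2norm_ip hh G_def)
  have dist: "dist_A_plus h = l2norm r"
    unfolding dist_A_plus_def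
  proof (rule cInf_eq_minimum)
    show "l2norm r \<in> (\<lambda>u. l2norm (\<lambda>t. h t - u t)) ` A_plus" using us_in by (auto simp: r_def)
    show "\<And>x. x \<in> (\<lambda>u. l2norm (\<lambda>t. h t - u t)) ` A_plus \<Longrightarrow> l2norm r \<le> x" using opt by auto
  qed
  have D: "(4*real m+\<alpha>+1)*(4*real m+\<alpha>+3) = (4*real m+1+\<alpha>)*(4*real m+3+\<alpha>)" by (simp add: algebra_simps)
  have Dpos: "0 < (4*real m+1+\<alpha>)*(4*real m+3+\<alpha>)" using assms by auto
  have sG: "sqrt G = sqrt 2 / sqrt (4*real m+2*\<alpha>+1)" unfolding G_def by (simp add: real_sqrt_divide)
  have d_val: "dist_A_plus h = sqrt 2 * \<alpha> * (2-\<alpha>) /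
           ((4*real m+\<alpha>+1)*(4*real m+\<alpha>+3) * sqrt (4*real m+2*\<alpha>+1))"
    unfolding dist nr sG L_def D by (simp add: field_simps)
  have l_val: "lambda_A_plus h = \<alpha> * (2-\<alpha>) / ((4*real m+\<alpha>+1)*(4*real m+\<alpha>+3))"
    unfolding lambda_A_plus_def dist nr nh D L_def using G0 by simp
  have proj': "is_proj_A_plus h (\<lambda>t. a * t^(2*m) + b * t^(2*m+2))"
    using proj unfolding us_def .
  have uniq': "\<forall>u. is_proj_A_plus h u \<longrightarrow>
           (AE t in lborel. t \<in> {-1..1} \<longrightarrow> u t = a * t^(2*m) + b * t^(2*m+2))"
  proof (intro allI impI)
    fix u assume "is_proj_A_plus h u"
    from uniq[OF this] show "AE t in lborel. t \<in> {-1..1} \<longrightarrow> u t = a * t^(2*m) + b * t^(2*m+2)"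
      unfolding us_def .
  qed
  show ?thesis by (rule conjI[OF proj' conjI[OF uniq' conjI[OF d_val l_val]]])
qed

end
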